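(* For every integer $n\ge 2$, the path $P_n$ on $n$ vertices satisfies $\lambda(P_n)=\lfloor n/2\rfloor$.
   Context: All graphs are finite and simple; $d(u,v)$ denotes the usual graph distance. For integers $m\le n$, $[m,n]=\{m,m+1,\ldots,n\}$. For a graph $G$ and a positive integer $l$, a distance $l$-labeling of $G$ is a function $f:V(G)\to[0,l]$ such that (i) $f(V(G))=[0,l]$ or $f(V(G))=[1,l]$, and (ii) whenever two distinct vertices $u,v$ satisfy $f(u)=f(v)=k$, we have $d(u,v)=k$. The labeling length $\lambda(G)$ is the minimum $l$ for which $G$ admits a distance $l$-labeling. *)

theory Defs
  imports Main "HOL-Library.Extended_Nat"
begin

definition simple_graph :: "'a set \<Rightarrow> ('a \<Rightarrow> 'a \<Rightarrow> bool) \<Rightarrow> bool" where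
  "simple_graph V E \<longleftrightarrow> finite V \<and> (\<forall>u v. E u v \<longrightarrow> E v u) \<and> (\<forall>u. \<not> E u u)
     \<and> (\<forall>u v. E u v \<longrightarrow> u \<in> V \<and> v \<in> V)"

definition walk_of_len :: "'a set \<Rightarrow> ('a \<Rightarrow> 'a \<Rightarrow> bool) \<Rightarrow> 'a \<Rightarrow> 'a \<Rightarrow> nat \<Rightarrow> bool" where
  "walk_of_len V E u v k \<longleftrightarrow> (\<exists>xs. length xs = Suc k \<and> hd xs = u \<and> last xs = v
      \<and> set xs \<subseteq> V \<and> (\<forall>i<k. E (xs ! i) (xs ! Suc i)))"

definition gdist :: "'a set \<Rightarrow> ('a \<Rightarrow> 'a \<Rightarrow> bool) \<Rightarrow> 'a \<Rightarrow> 'a \<Rightarrow> enat" where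
  "gdist V E u v = (if \<exists>k. walk_of_len V E u v k
      then enat (LEAST k. walk_of_len V E u v k) else \<infinity>)"

definition distance_labeling :: "'a set \<Rightarrow> ('a \<Rightarrow> 'a \<Rightarrow> bool) \<Rightarrow> ('a \<Rightarrow> nat) \<Rightarrow> nat \<Rightarrow> bool" where
  "distance_labeling V E f l \<longleftrightarrow>
     (f ` V = {0..l} \<or> f ` V = {1..l}) \<and>
     (\<forall>u\<in>V. \<forall>v\<in>V. u \<noteq> v \<and> f u = f v \<longrightarrow> gdist V E u v = enat (f u))"

definition labeling_length :: "'a set \<Rightarrow> ('a \<Rightarrow> 'a \<Rightarrow> bool) \<Rightarrow> nat" where
  "labeling_length V E = (LEAST l. 0 < l \<and> (\<exists>f. distance_labeling V E f l))"

definition path_V :: "nat \<Rightarrow> nat set" where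
  "path_V n = {0..<n}"

definition path_E :: "nat \<Rightarrow> nat \<Rightarrow> nat \<Rightarrow> bool" where
  "path_E n i j \<longleftrightarrow> i < n \<and> j < n \<and> (i + 1 = j \<or> j + 1 = i)"

end

theory Submission
  imports Defs
begin

lemma walk_lb:
  assumes "walk_of_len (path_V n) (path_E n) i j k"
  shows "nat \<bar>int i - int j\<bar> \<le> k"
proof -
  obtain xs where xs: "length xs = Suc k" "hd xs = i" "last xs = j"
     "set xs \<subseteq> path_V n" "\<forall>t<k. path_E n (xs ! t) (xs ! Suc t)"
    using assms unfolding walk_of_len_def by blast
  have "\<forall>t. t \<le> k \<longrightarrow> \<bar>int (xs!0) - int (xs!t)\<bar> \<le> int t"
  proof
    fix t show "t \<le> k \<longrightarrow> \<bar>int (xs!0) - int (xs!t)\<bar> \<le> int t"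
    proof (induction t)
      case 0 then show ?case by simp
    next
      case (Suc t)
      show ?case
      proof
        assume "Suc t \<le> k"
        then have "path_E n (xs ! t) (xs ! Suc t)" using xs(5) by auto
        then have "xs ! t + 1 = xs ! Suc t \<or> xs ! Suc t + 1 = xs ! t" unfolding path_E_def by auto
        then show "\<bar>int (xs!0) - int (xs!Suc t)\<bar> \<le> int (Suc t)" using Suc \<open>Suc t \<le> k\<close> by auto
      qed
    qed
  qed
  moreover have "xs \<noteq> []" using xs(1) by auto
  then have "xs!0 = i" "xs!k = j" using xs by (auto simp: hd_conv_nth last_conv_nth)
  ultimately show ?thesis by fastforce
qed

lemma walk_ex:
  assumes "i < n" "j < n"
  shows "walk_of_len (path_V n) (path_E n) i j (nat \<bar>int i - int j\<bar>)"
proof (cases "i \<le> j")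
  case True
  let ?xs = "map (\<lambda>t. i+t) [0..<Suc (j-i)]"
  have "nat \<bar>int i - int j\<bar> = j - i" using True by simp
  moreover have "length ?xs = Suc (j-i)" "hd ?xs = i" "last ?xs = j" 
    "set ?xs \<subseteq> path_V n" "\<forall>t<j-i. path_E n (?xs ! t) (?xs ! Suc t)"
    using True assms by (auto simp: path_V_def path_E_def hd_map last_map nth_append simp del: upt_Suc)
  ultimately show ?thesis unfolding walk_of_len_def by metis
next
  case False
  let ?xs = "map (\<lambda>t. i-t) [0..<Suc (i-j)]"
  have "nat \<bar>int i - int j\<bar> = i - j" using False by simp
  moreover have "length ?xs = Suc (i-j)" "hd ?xs = i" "last ?xs = j" 
    "set ?xs \<subseteq> path_V n" "\<forall>t<i-j. path_E n (?xs ! t) (?xs ! Suc t)"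
    using False assms by (auto simp: path_V_def path_E_def hd_map last_map nth_append simp del: upt_Suc)
  ultimately show ?thesis unfolding walk_of_len_def by metis
qed

lemma path_dist:
  assumes "i < n" "j < n"
  shows "gdist (path_V n) (path_E n) i j = enat (nat \<bar>int i - int j\<bar>)"
proof -
  have "(LEAST k. walk_of_len (path_V n) (path_E n) i j k) = nat \<bar>int i - int j\<bar>"
    by (rule Least_equality) (use walk_ex[OF assms] walk_lb in auto)
  then show ?thesis unfolding gdist_def using walk_ex[OF assms] by auto
qed

definition g :: "nat \<Rightarrow> nat \<Rightarrow> nat" where
  "g m i = (if i \<le> m then nat \<bar>int m - 2 * int i\<bar> else nat \<bar>3 * int m + 1 - 2 * int i\<bar>)"

lemma par: "(2::int) * a \<noteq> 2 * b + 1" by presburger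

lemma g_dist_int:
  fixes m u v :: int
  assumes "0 \<le> u" "0 \<le> v" "u \<le> 2*m" "v \<le> 2*m" "u \<noteq> v"
   "(if u \<le> m then \<bar>m - 2*u\<bar> else \<bar>3*m+1-2*u\<bar>) = (if v \<le> m then \<bar>m - 2*v\<bar> else \<bar>3*m+1-2*v\<bar>)"
  shows "\<bar>u - v\<bar> = (if u \<le> m then \<bar>m - 2*u\<bar> else \<bar>3*m+1-2*u\<bar>)"
proof -
  have A: False if "2*(v-u) = 2*m+1" for u v using par[of "v-u" m] that by simp
  have B: False if "2*(u+v) = 2*(2*m)+1" for u v using par[of "u+v" "2*m"] that by simp
  have C: False if "2*(u+v) = 2*(m)+1" for u v using par[of "u+v" "m"] that by simp
  have D: False if "2*(u+v) = 2*(3*m)+1" for u v using par[of "u+v" "3*m"] that by simp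
  show ?thesis using assms A[of u v] A[of v u] B[of u v] C[of u v] D[of u v]
    by (auto simp: abs_if split: if_splits; linarith)
qed

lemma g_dist:
  assumes "u < 2*m+1" "v < 2*m+1" "u \<noteq> v" "g m u = g m v"
  shows "nat \<bar>int u - int v\<bar> = g m u"
proof -
  have "(if int u \<le> int m then \<bar>int m - 2*int u\<bar> else \<bar>3*int m+1-2*int u\<bar>) = (if int v \<le> int m then \<bar>int m - 2*int v\<bar> else \<bar>3*int m+1-2*int v\<bar>)"
    using assms(4) unfolding g_def by (auto split: if_splits)
  from g_dist_int[OF _ _ _ _ _ this] assms(1-3)
  have "\<bar>int u - int v\<bar> = (if int u \<le> int m then \<bar>int m - 2*int u\<bar> else \<bar>3*int m+1-2*int u\<bar>)" by simp
  then show ?thesis unfolding g_def by (auto split: if_splits)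
qed

lemma g_img: "g m ` {0..<2*m+1} = {0..m}"
proof
  show "g m ` {0..<2*m+1} \<subseteq> {0..m}" by (auto simp: g_def)
  show "{0..m} \<subseteq> g m ` {0..<2*m+1}"
  proof
    fix k assume k: "k \<in> {0..m}"
    show "k \<in> g m ` {0..<2*m+1}"
    proof (cases "even (m - k)")
      case True
      then obtain i where i: "m - k = 2 * i" by blast
      have "g m i = k" "i < 2*m+1" using i k by (auto simp: g_def)
      then show ?thesis by force
    next
      case False
      then have "even (3*m+1-k)" using k by presburger
      then obtain i where i: "3*m+1-k = 2 * i" by blast
      have "k < m" using False k by (cases "k = m") auto
      have "g m i = k" "i < 2*m+1" using i k \<open>k < m\<close> by (auto simp: g_def)
      then show ?thesis by force
    qed
  qed
qed

lemma odd_lab: "distance_labeling (path_V (2*m+1)) (path_E (2*m+1)) (g m) m"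
  unfolding distance_labeling_def using g_img g_dist path_dist
  by (auto simp: path_V_def)

lemma even_lab: assumes "m \<ge> 1"
  shows "distance_labeling (path_V (2*m)) (path_E (2*m)) (\<lambda>i. if i = 2*m-1 then m else g (m-1) i) m"
proof -
  let ?f = "\<lambda>i. if i = 2*m-1 then m else g (m-1) i"
  have V: "{0..<2*m} = insert (2*m-1) {0..<2*(m-1)+1}" using assms by auto
  have "?f ` {0..<2*(m-1)+1} = g (m-1) ` {0..<2*(m-1)+1}" using assms by (intro image_cong) auto
  then have "?f ` {0..<2*m} = insert m {0..m-1}" unfolding V image_insert using g_img[of "m-1"] by (simp only:) simp
  also have "\<dots> = {0..m}" using assms by auto
  finally have img: "?f ` path_V (2*m) = {0..m}" by (simp add: path_V_def)
  have lt: "g (m-1) i \<le> m - 1" if "i < 2*(m-1)+1" for i using g_img[of "m-1"] that by auto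
  have "gdist (path_V (2*m)) (path_E (2*m)) u v = enat (?f u)"
    if "u \<in> path_V (2*m)" "v \<in> path_V (2*m)" "u \<noteq> v" "?f u = ?f v" for u v
  proof -
    have sm: "w < 2*(m-1)+1" if "w < 2*m" "w \<noteq> 2*m-1" for w using that assms by auto
    have "u \<noteq> 2*m-1"
    proof
      assume "u = 2*m-1"
      then have "v \<noteq> 2*m-1" "g (m-1) v = m" using that by auto
      then show False using lt[OF sm[of v]] that assms by (auto simp: path_V_def)
    qed
    moreover have "v \<noteq> 2*m-1"
    proof
      assume "v = 2*m-1"
      then have "u \<noteq> 2*m-1" "g (m-1) u = m" using that by auto
      then show False using lt[OF sm[of u]] that assms by (auto simp: path_V_def)
    qed
    ultimately have "u \<noteq> 2*m-1" "v \<noteq> 2*m-1" by auto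
    then have "u < 2*(m-1)+1" "v < 2*(m-1)+1" using that assms by (auto simp: path_V_def)
    then show ?thesis using that g_dist[of u "m-1" v] path_dist[of u "2*m" v] \<open>u \<noteq> 2*m-1\<close> \<open>v \<noteq> 2*m-1\<close>
      by (auto simp: path_V_def)
  qed
  then show ?thesis unfolding distance_labeling_def using img by blast
qed

lemma lower:
  assumes "distance_labeling (path_V n) (path_E n) f l"
  shows "n \<le> 2*l+1"
proof -
  define F where "F k = {v \<in> {0..<n}. f v = k}" for k
  have img: "f ` {0..<n} \<subseteq> {0..l}" using assms unfolding distance_labeling_def path_V_def by auto
  have dist: "nat \<bar>int u - int v\<bar> = f u" if "u \<in> F k" "v \<in> F k" "u \<noteq> v" for u v k
    using assms that path_dist[of u n v] unfolding distance_labeling_def F_def path_V_def by auto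
  have cF: "card (F k) \<le> (if k = 0 then 1 else 2)" for k
  proof (cases "F k = {}")
    case True then show ?thesis by simp
  next
    case False
    have fin: "finite (F k)" by (simp add: F_def)
    define a where "a = Min (F k)"
    have a: "a \<in> F k" "\<And>v. v \<in> F k \<Longrightarrow> a \<le> v" using False fin by (auto simp: a_def)
    have fa: "f a = k" using a(1) by (simp add: F_def)
    have "F k \<subseteq> {a, a + k}"
    proof
      fix v assume v: "v \<in> F k"
      show "v \<in> {a, a+k}"
      proof (cases "v = a")
        case False
        then have "nat \<bar>int v - int a\<bar> = k" using dist[OF v a(1)] F_def v by auto
        then show ?thesis using a(2)[OF v] by auto
      qed simp
    qed
    then have "card (F k) \<le> card {a, a+k}" by (rule card_mono[rotated]) simp
    also have "\<dots> \<le> (if k = 0 then 1 else 2)" by (auto simp: card_insert_if)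
    finally show ?thesis .
  qed
  have "{0..<n} \<subseteq> (\<Union>k\<in>{0..l}. F k)" using img by (auto simp: F_def)
  then have "card {0..<n} \<le> card (\<Union>k\<in>{0..l}. F k)" by (rule card_mono[rotated]) (simp add: F_def)
  also have "\<dots> \<le> (\<Sum>k\<in>{0..l}. card (F k))" by (rule card_UN_le) simp
  also have "\<dots> \<le> (\<Sum>k\<in>{0..l}. (if k = 0 then 1 else 2))" by (rule sum_mono) (rule cF)
  also have "(\<Sum>k\<in>{0..l}. (if k = 0 then 1 else 2)) = 1 + (\<Sum>k\<in>{1..l}. (2::nat))"
  proof -
    have "{0..l} = insert 0 {1..l}" by auto
    then show ?thesis by (simp add: sum.insert)
  qed
  also have "\<dots> = 2*l+1" by simp
  finally show ?thesis by simp
qed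

theorem mainTheorem2:
  fixes n :: nat
  assumes "n \<ge> 2"
  shows "labeling_length (path_V n) (path_E n) = n div 2"
  unfolding labeling_length_def
proof (rule Least_equality)
  show "0 < n div 2 \<and> (\<exists>f. distance_labeling (path_V n) (path_E n) f (n div 2))"
  proof (cases "even n")
    case True
    then obtain m where m: "n = 2*m" by blast
    then have "m \<ge> 1" using assms by simp
    then show ?thesis using even_lab[of m] m by auto
  next
    case False
    then obtain m where m: "n = 2*m+1" using oddE by blast
    then have "m \<ge> 1" using assms by simp
    then show ?thesis using odd_lab[of m] m by auto
  qed
next
  fix l assume "0 < l \<and> (\<exists>f. distance_labeling (path_V n) (path_E n) f l)"
  then obtain f where "distance_labeling (path_V n) (path_E n) f l" by blast
  from lower[OF this] show "n div 2 \<le> l" by simp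
qed

end
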